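(* Let $G$ be the final graph of the uncoordinated construction (described in the context) on a set $P\subset\mathbb{R}^d$ of $n$ points with parameter $s>1$, and let $\alpha$ be the aspect ratio of $P$. Then the total Euclidean length of the edges of $G$ is $O(\lg\alpha\cdot|\mathrm{MST}|\cdot s^{d+1})$, where $|\mathrm{MST}|$ is the total length of a Euclidean minimum spanning tree of $P$ and the implied constant depends only on $d$.
   Context: Fix $d\ge 1$; $|xy|$ is Euclidean distance; $\lg$ is logarithm base 2. The aspect ratio is $\alpha=\max_{u,v\in P}|uv|/\min_{u\ne v\in P}|uv|$. Uncoordinated construction: start with the graph $G$ on vertex set $P$ with no edges. Every ordered pair $(p,q)$ of distinct points of $P$ is processed exactly once, in an arbitrary order, one at a time. When $(p,q)$ is processed, the edge $pq$ is added to $G$ unless $G$ currently contains an edge whose endpoints can be labeled $p',q'$ with $|pp'|\le |p'q'|/(2s+2)$ and $|qq'|\le |p'q'|/(2s+2)$. $G$ is the graph after all pairs are processed. *)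

theory Defs
  imports "HOL-Analysis.Analysis"
begin

text \<open>Edges are unordered pairs, represented as doubleton sets.\<close>

definition blocked :: "real \<Rightarrow> 'a::euclidean_space set set \<Rightarrow> 'a \<Rightarrow> 'a \<Rightarrow> bool" where
  "blocked s E p q \<longleftrightarrow> (\<exists>p' q'. {p', q'} \<in> E \<and>
      dist p p' \<le> dist p' q' / (2 * s + 2) \<and> dist q q' \<le> dist p' q' / (2 * s + 2))"

definition process_pair :: "real \<Rightarrow> 'a::euclidean_space set set \<Rightarrow> 'a \<times> 'a \<Rightarrow> 'a set set" where
  "process_pair s E pq = (if blocked s E (fst pq) (snd pq) then E else insert {fst pq, snd pq} E)"

definition uncoord_graph :: "real \<Rightarrow> ('a::euclidean_space \<times> 'a) list \<Rightarrow> 'a set set" where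
  "uncoord_graph s ord = foldl (process_pair s) {} ord"

definition valid_order :: "'a set \<Rightarrow> ('a \<times> 'a) list \<Rightarrow> bool" where
  "valid_order P ord \<longleftrightarrow> distinct ord \<and> set ord = {(p, q). p \<in> P \<and> q \<in> P \<and> p \<noteq> q}"

definition total_length :: "'a::euclidean_space set set \<Rightarrow> real" where
  "total_length E = (\<Sum>e\<in>E. diameter e)"

definition spanning_tree :: "'a set \<Rightarrow> 'a set set \<Rightarrow> bool" where
  "spanning_tree P T \<longleftrightarrow>
     T \<subseteq> {{u, v} | u v. u \<in> P \<and> v \<in> P \<and> u \<noteq> v} \<and>
     card T = card P - 1 \<and>
     (\<forall>u\<in>P. \<forall>v\<in>P. (u, v) \<in> {(x, y). {x, y} \<in> T}\<^sup>*)"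

definition mst_weight :: "'a::euclidean_space set \<Rightarrow> real" where
  "mst_weight P = Inf {total_length T | T. spanning_tree P T}"

definition aspect_ratio :: "'a::euclidean_space set \<Rightarrow> real" where
  "aspect_ratio P = Max {dist u v | u v. u \<in> P \<and> v \<in> P} /
                    Min {dist u v | u v. u \<in> P \<and> v \<in> P \<and> u \<noteq> v}"

end

theory Submission
  imports Defs
begin


lemma packing:
  fixes a :: "'a::euclidean_space"
  assumes fin: "finite N" and sub: "N \<subseteq> cball a R" and r: "r > 0" and R: "R \<ge> 0"
    and sep: "\<forall>x\<in>N. \<forall>y\<in>N. x \<noteq> y \<longrightarrow> r \<le> dist x y"
  shows "real (card N) \<le> ((2*R + r)/r)^DIM('a)"
proof -
  define h where "h = r/2"
  have h: "h > 0" using r by (simp add: h_def)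
  define V where "V = unit_ball_vol (real DIM('a))"
  have V: "V > 0" by (simp add: V_def)
  have disj: "disjoint_family_on (\<lambda>x. ball x h) N"
    unfolding disjoint_family_on_def
  proof (intro ballI impI)
    fix x y assume xy: "x \<in> N" "y \<in> N" "x \<noteq> y"
    show "ball x h \<inter> ball y h = {}"
    proof (rule ccontr)
      assume "ball x h \<inter> ball y h \<noteq> {}"
      then obtain z where "dist x z < h" "dist y z < h" by auto
      then have "dist x y < r" using dist_triangle3[of x y z] by (simp add: h_def dist_commute)
      with sep xy show False by force
    qed
  qed
  have "measure lborel (\<Union>x\<in>N. ball x h) = (\<Sum>x\<in>N. measure lborel (ball x h))"
    by (rule measure_finite_Union[OF fin]) (use h in \<open>auto simp: disj emeasure_ball\<close>)
  also have "\<dots> = real (card N) * (V * h ^ DIM('a))"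
    using h by (simp add: content_ball V_def)
  finally have eq: "measure lborel (\<Union>x\<in>N. ball x h) = real (card N) * (V * h ^ DIM('a))" .
  have "(\<Union>x\<in>N. ball x h) \<subseteq> ball a (R + h)"
  proof
    fix z assume "z \<in> (\<Union>x\<in>N. ball x h)"
    then obtain x where "x \<in> N" "dist x z < h" by auto
    moreover have "dist a x \<le> R" using sub \<open>x \<in> N\<close> by auto
    ultimately show "z \<in> ball a (R + h)" using dist_triangle[of a z x] by auto
  qed
  then have "measure lborel (\<Union>x\<in>N. ball x h) \<le> measure lborel (ball a (R + h))"
    using h R by (intro measure_mono_fmeasurable) (auto simp: fmeasurable_def emeasure_ball less_top[symmetric] intro!: borel_open)
  also have "\<dots> = V * (R + h) ^ DIM('a)" using h R by (simp add: content_ball V_def)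
  finally have "real (card N) * h ^ DIM('a) * V \<le> (R + h) ^ DIM('a) * V" using eq by (simp add: algebra_simps)
  then have "real (card N) * h ^ DIM('a) \<le> (R + h) ^ DIM('a)" using V by simp
  then have "real (card N) \<le> (R + h) ^ DIM('a) / h ^ DIM('a)" using h by (simp add: field_simps)
  also have "\<dots> = ((2*R + r)/r)^DIM('a)" by (simp add: h_def power_divide field_simps)
  finally show ?thesis .
qed



lemma diam2: "diameter {x, y} = dist x (y::'a::euclidean_space)"
proof -
  have "diameter {x,y} \<le> dist x y"
    by (rule diameter_le) (auto simp: dist_norm[symmetric] dist_commute)
  moreover have "dist x y \<le> diameter {x,y}"
    by (rule diameter_bounded_bound) auto
  ultimately show ?thesis by simp
qed

lemma net_exists:
  fixes Q :: "'a::metric_space set"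
  assumes "finite Q" "r > 0"
  shows "\<exists>N \<subseteq> Q. (\<forall>x\<in>N. \<forall>y\<in>N. x \<noteq> y \<longrightarrow> r \<le> dist x y) \<and> (\<forall>p\<in>Q. \<exists>n\<in>N. dist p n < r)"
  using assms(1)
proof (induction Q rule: finite_induct)
  case empty then show ?case by auto
next
  case (insert x F)
  then obtain N where N: "N \<subseteq> F" "\<forall>x\<in>N. \<forall>y\<in>N. x \<noteq> y \<longrightarrow> r \<le> dist x y" "\<forall>p\<in>F. \<exists>n\<in>N. dist p n < r"
    by auto
  show ?case
  proof (cases "\<exists>n\<in>N. dist x n < r")
    case True then show ?thesis using N by (intro exI[of _ N]) auto
  next
    case False
    then have "\<forall>n\<in>N. r \<le> dist x n" by auto
    then show ?thesis using N assms(2)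
      by (intro exI[of _ "insert x N"]) (auto simp: dist_commute)
  qed
qed

lemma cut_sum:
  fixes T :: "'a::euclidean_space set set"
  assumes fin: "finite T" and dbl: "\<forall>e\<in>T. \<exists>x y. e = {x,y}" and path: "(n, m) \<in> {(x,y). {x,y} \<in> T}\<^sup>*" and rho: "\<rho> \<le> dist n m"
  shows "\<rho> \<le> (\<Sum>e\<in>{e\<in>T. \<exists>u\<in>e. dist n u < \<rho>}. diameter e)"
proof -
  define F where "F = {e\<in>T. \<exists>u\<in>e. dist n u < \<rho>}"
  have finF: "finite F" using fin by (simp add: F_def)
  have mono: "(\<Sum>e\<in>F'. diameter e) \<le> (\<Sum>e\<in>F. diameter e)" if "F' \<subseteq> F" for F'
    by (rule sum_mono2[OF finF that]) (use dbl in \<open>auto simp: F_def diam2\<close>)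
  have "(\<rho> \<le> (\<Sum>e\<in>F. diameter e)) \<or> (\<exists>F'\<subseteq>F. y \<in> insert n (\<Union>F') \<and>
          (\<forall>w \<in> insert n (\<Union>F'). dist n w \<le> (\<Sum>e\<in>F'. diameter e)))" if "(n, y) \<in> {(x,y). {x,y} \<in> T}\<^sup>*" for y
    using that
  proof (induction rule: rtrancl_induct)
    case base
    then show ?case by (intro disjI2 exI[of _ "{}"]) auto
  next
    case (step y z)
    then have yz: "{y,z} \<in> T" by auto
    show ?case
    proof (cases "\<rho> \<le> (\<Sum>e\<in>F. diameter e)")
      case True then show ?thesis by simp
    next
      case False
      with step.IH obtain F' where F': "F' \<subseteq> F" "y \<in> insert n (\<Union>F')"
        "\<forall>w \<in> insert n (\<Union>F'). dist n w \<le> (\<Sum>e\<in>F'. diameter e)" by auto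
      have dy: "dist n y \<le> (\<Sum>e\<in>F'. diameter e)" using F' by auto
      have finF': "finite F'" using F'(1) finF finite_subset by auto
      show ?thesis
      proof (cases "\<rho> \<le> dist n y")
        case True
        then show ?thesis using dy mono[OF F'(1)] by simp
      next
        case False
        then have inF: "{y,z} \<in> F" using yz by (auto simp: F_def)
        show ?thesis
        proof (cases "{y,z} \<in> F'")
          case True
          then show ?thesis using F' by (intro disjI2 exI[of _ F']) auto
        next
          case nin: False
          define F'' where "F'' = insert {y,z} F'"
          have sum'': "(\<Sum>e\<in>F''. diameter e) = dist y z + (\<Sum>e\<in>F'. diameter e)"
            using finF' nin by (simp add: F''_def diam2)
          have "0 \<le> dist y z" by simp
          have "\<forall>w \<in> insert n (\<Union>F''). dist n w \<le> (\<Sum>e\<in>F''. diameter e)"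
          proof
            fix w assume w: "w \<in> insert n (\<Union>F'')"
            show "dist n w \<le> (\<Sum>e\<in>F''. diameter e)"
            proof (cases "w \<in> insert n (\<Union>F')")
              case True
              then have "dist n w \<le> (\<Sum>e\<in>F'. diameter e)" using F'(3) by blast
              then show ?thesis using sum'' zero_le_dist[of y z] by linarith
            next
              case False
              with w have "w = y \<or> w = z" by (auto simp: F''_def)
              then show ?thesis
              proof
                assume wy: "w = y"
                have "dist n y \<le> (\<Sum>e\<in>F''. diameter e)" using dy sum'' zero_le_dist[of y z] by linarith
                then show ?thesis using wy by simp
              next
                assume "w = z"
                then show ?thesis using dy sum'' dist_triangle[of n z y] by (simp add: dist_commute)
              qed
            qed
          qed
          then show ?thesis using F'(1) inF
            by (intro disjI2 exI[of _ F'']) (auto simp: F''_def)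
        qed
      qed
    qed
  qed
  from this[OF path] show ?thesis
  proof
    assume "\<rho> \<le> (\<Sum>e\<in>F. diameter e)" then show ?thesis by (simp add: F_def)
  next
    assume "\<exists>F'\<subseteq>F. m \<in> insert n (\<Union>F') \<and> (\<forall>w \<in> insert n (\<Union>F'). dist n w \<le> (\<Sum>e\<in>F'. diameter e))"
    then obtain F' where F': "F' \<subseteq> F" "dist n m \<le> (\<Sum>e\<in>F'. diameter e)" by blast
    have "\<rho> \<le> (\<Sum>e\<in>F. diameter e)" using mono[OF F'(1)] F'(2) rho by linarith
    then show ?thesis by (simp add: F_def)
  qed
qed



lemma tree_dist_le:
  fixes T :: "'a::euclidean_space set set"
  assumes fin: "finite T" and dbl: "\<forall>e\<in>T. \<exists>x y. e = {x,y}"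
    and path: "(u, v) \<in> {(x,y). {x,y} \<in> T}\<^sup>*"
  shows "dist u v \<le> total_length T"
proof -
  have "dist u v \<le> (\<Sum>e\<in>{e\<in>T. \<exists>w\<in>e. dist u w < dist u v}. diameter e)"
    by (rule cut_sum[OF fin dbl path]) simp
  also have "\<dots> \<le> total_length T" unfolding total_length_def
    by (rule sum_mono2[OF fin]) (use dbl in \<open>auto simp: diam2\<close>)
  finally show ?thesis .
qed

lemma net_card_bound:
  fixes T :: "'a::euclidean_space set set"
  assumes fin: "finite T" and dbl: "\<forall>e\<in>T. \<exists>x y. e = {x,y}"
    and conn: "\<forall>u\<in>P. \<forall>v\<in>P. (u, v) \<in> {(x,y). {x,y} \<in> T}\<^sup>*"
    and NP: "N \<subseteq> P" and finN: "finite N" and r: "r > 0"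
    and sep: "\<forall>x\<in>N. \<forall>y\<in>N. x \<noteq> y \<longrightarrow> r \<le> dist x y"
    and two: "2 \<le> card N"
  shows "real (card N) * (r/2) \<le> 2 * total_length T"
proof -
  define Q where "Q = (\<lambda>(n::'a) e. \<exists>u\<in>e. dist n u < r/2)"
  have each: "r/2 \<le> (\<Sum>e\<in>{e\<in>T. Q n e}. diameter e)" if n: "n \<in> N" for n
  proof -
    have "\<exists>m\<in>N. m \<noteq> n"
    proof (rule ccontr)
      assume "\<not> ?thesis"
      then have "N \<subseteq> {n}" by auto
      then have "card N \<le> 1" using card_mono[of "{n}" N] by auto
      with two show False by simp
    qed
    then obtain m where m: "m \<in> N" "m \<noteq> n" by auto
    have "r/2 \<le> dist n m" using sep m n r by force
    moreover have "(n, m) \<in> {(x,y). {x,y} \<in> T}\<^sup>*" using conn NP n m by blast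
    ultimately show ?thesis unfolding Q_def using cut_sum[OF fin dbl] by blast
  qed
  have cnt: "card {n\<in>N. Q n e} \<le> 2" if e: "e \<in> T" for e
  proof -
    obtain x y where xy: "e = {x,y}" using dbl e by blast
    have one: "card {n\<in>N. dist n z < r/2} \<le> 1" for z
    proof -
      have "\<forall>a\<in>{n\<in>N. dist n z < r/2}. \<forall>b\<in>{n\<in>N. dist n z < r/2}. a = b"
      proof (intro ballI)
        fix a b assume ab: "a \<in> {n\<in>N. dist n z < r/2}" "b \<in> {n\<in>N. dist n z < r/2}"
        then have "dist a b < r" using dist_triangle3[of a b z] by (simp add: dist_commute)
        then show "a = b" using sep ab by force
      qed
      then show ?thesis using finN by (simp add: card_le_Suc0_iff_eq)
    qed
    have "{n\<in>N. Q n e} \<subseteq> {n\<in>N. dist n x < r/2} \<union> {n\<in>N. dist n y < r/2}"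
      by (auto simp: Q_def xy)
    then have "card {n\<in>N. Q n e} \<le> card ({n\<in>N. dist n x < r/2} \<union> {n\<in>N. dist n y < r/2})"
      using finN by (intro card_mono) auto
    also have "\<dots> \<le> card {n\<in>N. dist n x < r/2} + card {n\<in>N. dist n y < r/2}"
      by (rule card_Un_le)
    finally show ?thesis using one[of x] one[of y] by linarith
  qed
  have "real (card N) * (r/2) = (\<Sum>n\<in>N. r/2)" by simp
  also have "\<dots> \<le> (\<Sum>n\<in>N. \<Sum>e\<in>{e\<in>T. Q n e}. diameter e)"
    by (rule sum_mono) (rule each)
  also have "\<dots> = (\<Sum>n\<in>N. \<Sum>e\<in>T. if Q n e then diameter e else 0)"
    using fin by (simp add: sum.inter_filter)
  also have "\<dots> = (\<Sum>e\<in>T. \<Sum>n\<in>N. if Q n e then diameter e else 0)"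
    by (rule sum.swap)
  also have "\<dots> = (\<Sum>e\<in>T. diameter e * real (card {n\<in>N. Q n e}))"
    using finN by (simp add: sum.inter_filter[symmetric] mult.commute)
  also have "\<dots> \<le> (\<Sum>e\<in>T. diameter e * 2)"
  proof (rule sum_mono)
    fix e assume e: "e \<in> T"
    have "0 \<le> diameter e" using dbl e by (auto simp: diam2)
    then show "diameter e * real (card {n\<in>N. Q n e}) \<le> diameter e * 2"
      using cnt[OF e] by (intro mult_left_mono) auto
  qed
  also have "\<dots> = 2 * total_length T" by (simp add: total_length_def sum_distrib_right mult.commute)
  finally show ?thesis .
qed



definition nearE :: "real \<Rightarrow> 'a::euclidean_space set \<Rightarrow> 'a set \<Rightarrow> bool" where
  "nearE c e1 e2 \<longleftrightarrow> (\<exists>p q p' q'. e1 = {p,q} \<and> e2 = {p',q'} \<and>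
      dist p p' \<le> dist p' q' / c \<and> dist q q' \<le> dist p' q' / c)"

lemma not_blocked_near:
  assumes "\<not> blocked s E p q" "e \<in> E"
  shows "\<not> nearE (2 * s + 2) {p,q} e"
proof
  assume "nearE (2 * s + 2) {p,q} e"
  then obtain a b p' q' where abpq: "{p,q} = {a,b}" "e = {p',q'}"
    "dist a p' \<le> dist p' q' / (2 * s + 2)" "dist b q' \<le> dist p' q' / (2 * s + 2)"
    unfolding nearE_def by blast
  from abpq(1) have "(a = p \<and> b = q) \<or> (a = q \<and> b = p)" by (auto simp: doubleton_eq_iff)
  then show False
  proof
    assume "a = p \<and> b = q"
    then show False using assms abpq unfolding blocked_def by blast
  next
    assume ab: "a = q \<and> b = p"
    have "{q', p'} \<in> E" using assms(2) abpq(2) by (simp add: insert_commute)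
    moreover have "dist p q' \<le> dist q' p' / (2 * s + 2)" "dist q p' \<le> dist q' p' / (2 * s + 2)"
      using ab abpq by (auto simp: dist_commute)
    ultimately show False using assms(1) unfolding blocked_def by blast
  qed
qed

definition good :: "real \<Rightarrow> 'a::euclidean_space set \<Rightarrow> 'a set set \<Rightarrow> bool" where
  "good s P E \<longleftrightarrow> E \<subseteq> {{p,q} | p q. p \<in> P \<and> q \<in> P \<and> p \<noteq> q} \<and>
     (\<forall>e1\<in>E. \<forall>e2\<in>E. e1 \<noteq> e2 \<longrightarrow> \<not> nearE (2 * s + 2) e1 e2 \<or> \<not> nearE (2 * s + 2) e2 e1)"

lemma good_process:
  assumes "good s P E" "fst pq \<in> P" "snd pq \<in> P" "fst pq \<noteq> snd pq"
  shows "good s P (process_pair s E pq)"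
proof (cases "blocked s E (fst pq) (snd pq)")
  case True then show ?thesis using assms by (simp add: process_pair_def)
next
  case False
  have nn: "\<forall>e\<in>E. \<not> nearE (2 * s + 2) {fst pq, snd pq} e"
    using not_blocked_near[OF False] by blast
  show ?thesis using False assms(1) assms(2-4) nn unfolding good_def process_pair_def
    by auto
qed

lemma good_foldl:
  assumes "set ord \<subseteq> {(p, q). p \<in> P \<and> q \<in> P \<and> p \<noteq> q}" "good s P E"
  shows "good s P (foldl (process_pair s) E ord)"
  using assms
proof (induction ord arbitrary: E)
  case Nil then show ?case by simp
next
  case (Cons a ord)
  have "good s P (process_pair s E a)"
    using Cons.prems by (intro good_process) auto
  then show ?case using Cons by simp
qed

lemma good_graph:
  assumes "valid_order P ord"
  shows "good s P (uncoord_graph s ord)"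
  unfolding uncoord_graph_def
  by (rule good_foldl) (use assms in \<open>auto simp: valid_order_def good_def\<close>)



lemma scale_count:
  fixes P :: "'a::euclidean_space set"
  assumes finP: "finite P" and good: "good s P G" and s: "s > 1" and l: "L > 0"
    and NP: "N \<subseteq> P"
    and sep: "\<forall>x\<in>N. \<forall>y\<in>N. x \<noteq> y \<longrightarrow> L/(4* s+4) \<le> dist x y"
    and cov: "\<forall>p\<in>P. \<exists>n\<in>N. dist p n < L/(4* s+4)"
  shows "real (card {e\<in>G. L \<le> diameter e \<and> diameter e < 2*L}) \<le> real (card N) * (37* s)^DIM('a)"
proof -
  define r where "r = L/(4* s+4)"
  have r: "r > 0" using s l by (simp add: r_def)
  define c where "c = 2* s+2"
  have c: "c > 0" using s by (simp add: c_def)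
  have rc: "2*r = L/c" using s by (simp add: r_def c_def field_simps)
  define net where "net p = (SOME n. n \<in> N \<and> dist p n < r)" for p
  have netp: "net p \<in> N \<and> dist p (net p) < r" if "p \<in> P" for p
    unfolding net_def using cov that someI_ex[of "\<lambda>n. n \<in> N \<and> dist p n < r"] by (auto simp: r_def)
  have finN: "finite N" using finite_subset[OF NP finP] .
  define EL where "EL = {e\<in>G. L \<le> diameter e \<and> diameter e < 2*L}"
  have GE: "G \<subseteq> {{p,q} | p q. p \<in> P \<and> q \<in> P \<and> p \<noteq> q}"
    and anti: "\<forall>e1\<in>G. \<forall>e2\<in>G. e1 \<noteq> e2 \<longrightarrow> \<not> nearE c e1 e2 \<or> \<not> nearE c e2 e1"
    using good by (auto simp: good_def c_def)
  have match: "nearE c {a,b} {a',b'}" 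
    if "a \<in> P" "b \<in> P" "a' \<in> P" "b' \<in> P" "net a = net a'" "net b = net b'" "L \<le> dist a' b'" for a b a' b'
  proof -
    have "dist a a' < 2*r" using netp[of a] netp[of a'] that dist_triangle[of a a' "net a"]
      by (simp add: dist_commute)
    moreover have "dist b b' < 2*r" using netp[of b] netp[of b'] that dist_triangle[of b b' "net b"]
      by (simp add: dist_commute)
    moreover have "2*r \<le> dist a' b' / c" using rc that c by (simp add: divide_right_mono)
    ultimately show ?thesis unfolding nearE_def by force
  qed
  have inj: "inj_on (\<lambda>e. net ` e) EL"
  proof (rule inj_onI, rule ccontr)
    fix e1 e2 assume e1: "e1 \<in> EL" and e2: "e2 \<in> EL" and eq: "net ` e1 = net ` e2" and ne: "e1 \<noteq> e2"
    obtain p1 q1 where pq1: "e1 = {p1,q1}" "p1 \<in> P" "q1 \<in> P" "p1 \<noteq> q1" using e1 GE by (auto simp: EL_def)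
    obtain p2 q2 where pq2: "e2 = {p2,q2}" "p2 \<in> P" "q2 \<in> P" "p2 \<noteq> q2" using e2 GE by (auto simp: EL_def)
    have l1: "L \<le> dist p1 q1" using e1 pq1 by (simp add: EL_def diam2)
    have l2: "L \<le> dist p2 q2" using e2 pq2 by (simp add: EL_def diam2)
    have "{net p1, net q1} = {net p2, net q2}" using eq pq1 pq2 by simp
    then have "(net p1 = net p2 \<and> net q1 = net q2) \<or> (net p1 = net q2 \<and> net q1 = net p2)"
      by (auto simp: doubleton_eq_iff)
    then have "nearE c e1 e2 \<and> nearE c e2 e1"
    proof
      assume h: "net p1 = net p2 \<and> net q1 = net q2"
      show ?thesis using match[of p1 q1 p2 q2] match[of p2 q2 p1 q1] h pq1 pq2 l1 l2 by auto
    next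
      assume h: "net p1 = net q2 \<and> net q1 = net p2"
      have "e2 = {q2, p2}" using pq2 by auto
      moreover have "L \<le> dist q2 p2" using l2 by (simp add: dist_commute)
      ultimately show ?thesis using match[of p1 q1 q2 p2] match[of q2 p2 p1 q1] h pq1 pq2 l1 by auto
    qed
    then show False using anti e1 e2 ne by (auto simp: EL_def)
  qed
  define R where "R = 2*L + 2*r"
  define S where "S = (SIGMA a:N. {b\<in>N. dist a b \<le> R})"
  have img: "(\<lambda>e. net ` e) ` EL \<subseteq> (\<lambda>(a,b). {a,b}) ` S"
  proof
    fix x assume "x \<in> (\<lambda>e. net ` e) ` EL"
    then obtain e where e: "e \<in> EL" "x = net ` e" by auto
    obtain p q where pq: "e = {p,q}" "p \<in> P" "q \<in> P" using e GE by (auto simp: EL_def)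
    have "dist p q < 2*L" using e pq by (simp add: EL_def diam2)
    then have "dist (net p) (net q) \<le> R"
      using netp[OF pq(2)] netp[OF pq(3)] dist_triangle[of "net p" "net q" p] dist_triangle[of p "net q" q]
      by (simp add: R_def dist_commute)
    then have "(net p, net q) \<in> S" using netp pq by (simp add: S_def)
    then show "x \<in> (\<lambda>(a,b). {a,b}) ` S" using e pq by force
  qed
  have R0: "0 \<le> R" using l r by (simp add: R_def)
  have sep': "\<forall>x\<in>N. \<forall>y\<in>N. x \<noteq> y \<longrightarrow> r \<le> dist x y" using sep by (simp add: r_def)
  have finS: "finite S" using finN by (simp add: S_def)
  have "card EL = card ((\<lambda>e. net ` e) ` EL)" using card_image[OF inj] by simp
  also have "\<dots> \<le> card ((\<lambda>(a,b). {a,b}) ` S)" by (rule card_mono[OF _ img]) (use finS in simp)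
  also have "\<dots> \<le> card S" by (rule card_image_le[OF finS])
  also have "\<dots> = (\<Sum>a\<in>N. card {b\<in>N. dist a b \<le> R})" using finN by (simp add: S_def card_SigmaI)
  finally have "real (card EL) \<le> (\<Sum>a\<in>N. real (card {b\<in>N. dist a b \<le> R}))" by (simp flip: of_nat_sum)
  also have "\<dots> \<le> (\<Sum>a\<in>N. (37* s)^DIM('a))"
  proof (rule sum_mono)
    fix a assume "a \<in> N"
    have "real (card {b\<in>N. dist a b \<le> R}) \<le> ((2*R + r)/r)^DIM('a)"
      by (rule packing) (use finN r sep' R0 in auto)
    also have "(2*R + r)/r = 16* s + 21"
    proof -
      have "L = (4* s+4)*r" using s by (simp add: r_def)
      then have "2*R + r = (16* s + 21)*r" by (simp add: R_def algebra_simps)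
      then show ?thesis using r by simp
    qed
    also have "(16* s + 21)^DIM('a) \<le> (37* s)^DIM('a)" using s by (intro power_mono) auto
    finally show "real (card {b\<in>N. dist a b \<le> R}) \<le> (37* s)^DIM('a)" .
  qed
  also have "\<dots> = real (card N) * (37* s)^DIM('a)" by simp
  finally show ?thesis by (simp add: EL_def)
qed



lemma per_scale:
  fixes P :: "'a::euclidean_space set" and T :: "'a set set"
  assumes finP: "finite P" and good: "good s P G" and s: "s > 1" and l: "L > 0"
    and finT: "finite T" and dbl: "\<forall>e\<in>T. \<exists>x y. e = {x,y}"
    and conn: "\<forall>u\<in>P. \<forall>v\<in>P. (u, v) \<in> {(x,y). {x,y} \<in> T}\<^sup>*"
  shows "(\<Sum>e\<in>{e\<in>G. L \<le> diameter e \<and> diameter e < 2*L}. diameter e)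
          \<le> 66 * 37^DIM('a) * s^(DIM('a)+1) * total_length T"
proof -
  define EL where "EL = {e\<in>G. L \<le> diameter e \<and> diameter e < 2*L}"
  define W where "W = total_length T"
  have W0: "0 \<le> W" unfolding W_def total_length_def by (rule sum_nonneg) (use dbl in \<open>auto simp: diam2\<close>)
  have GE: "G \<subseteq> {{p,q} | p q. p \<in> P \<and> q \<in> P \<and> p \<noteq> q}" using good by (simp add: good_def)
  have finG: "finite G"
  proof (rule finite_subset[OF GE])
    have "{{p,q} | p q. p \<in> P \<and> q \<in> P \<and> p \<noteq> q} \<subseteq> (\<lambda>(p,q). {p,q}) ` (P \<times> P)" by auto
    then show "finite {{p,q} | p q. p \<in> P \<and> q \<in> P \<and> p \<noteq> q}"
      using finP finite_subset by blast
  qed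
  have rhs0: "0 \<le> 66 * 37^DIM('a) * s^(DIM('a)+1) * W" using s W0 by simp
  show ?thesis
  proof (cases "EL = {}")
    case True then show ?thesis using rhs0 unfolding EL_def[symmetric] W_def[symmetric] by simp
  next
    case False
    then obtain e where e: "e \<in> EL" by auto
    then obtain p q where pq: "e = {p,q}" "p \<in> P" "q \<in> P" using GE by (auto simp: EL_def)
    have "L \<le> dist p q" using e pq by (simp add: EL_def diam2)
    also have "dist p q \<le> W" unfolding W_def
      by (rule tree_dist_le[OF finT dbl]) (use conn pq in blast)
    finally have lW: "L \<le> W" .
    define r where "r = L/(4* s+4)"
    have r: "r > 0" using s l by (simp add: r_def)
    obtain N where N: "N \<subseteq> P" "\<forall>x\<in>N. \<forall>y\<in>N. x \<noteq> y \<longrightarrow> r \<le> dist x y" "\<forall>p\<in>P. \<exists>n\<in>N. dist p n < r"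
      using net_exists[OF finP r] by blast
    have finN: "finite N" using finite_subset[OF N(1) finP] .
    have cEL: "real (card EL) \<le> real (card N) * (37* s)^DIM('a)"
      unfolding EL_def by (rule scale_count[OF finP good s l N(1)]) (use N in \<open>auto simp: r_def\<close>)
    have Nl: "real (card N) * L \<le> L + 16*(s+1)*W"
    proof (cases "2 \<le> card N")
      case True
      have "real (card N) * (r/2) \<le> 2 * W" unfolding W_def
        by (rule net_card_bound[OF finT dbl conn N(1) finN r N(2) True])
      then have "real (card N) * L \<le> 16*(s+1)*W" using s by (simp add: r_def field_simps)
      then show ?thesis using l by simp
    next
      case False
      then have "real (card N) \<le> 1" by simp
      then have "real (card N) * L \<le> L" using l by (simp add: mult_le_cancel_right1)
      then show ?thesis using s W0 by (smt (verit) mult_nonneg_nonneg)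
    qed
    have "(\<Sum>e\<in>EL. diameter e) \<le> (\<Sum>e\<in>EL. 2*L)" by (rule sum_mono) (simp add: EL_def)
    also have "\<dots> = 2*L * real (card EL)" by simp
    also have "\<dots> \<le> 2*L * (real (card N) * (37* s)^DIM('a))" using cEL l by simp
    also have "\<dots> = 2*(real (card N) * L) * (37* s)^DIM('a)" by simp
    also have "\<dots> \<le> 2*(L + 16*(s+1)*W) * (37* s)^DIM('a)" using Nl s by (intro mult_right_mono) auto
    also have "\<dots> \<le> (66* s*W) * (37* s)^DIM('a)"
    proof (intro mult_right_mono)
      have "L \<le> s * W" using lW s W0 by (smt (verit) mult_le_cancel_right1 mult.commute)
      moreover have "W \<le> s*W" using mult_right_mono[of 1 s W] s W0 by simp
      ultimately show "2*(L + 16*(s+1)*W) \<le> 66* s*W" by (simp add: algebra_simps)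
    qed (use s in auto)
    also have "\<dots> = 66 * 37^DIM('a) * s^(DIM('a)+1) * W" by (simp add: power_mult_distrib algebra_simps)
    finally show ?thesis by (simp add: EL_def W_def)
  qed
qed



lemma dyadic:
  fixes x :: real
  assumes x: "x \<ge> 1"
  shows "2^(nat \<lfloor>log 2 x\<rfloor>) \<le> x \<and> x < 2^(nat \<lfloor>log 2 x\<rfloor> + 1)"
proof -
  define y where "y = log 2 x"
  have y0: "0 \<le> y" using x by (simp add: y_def)
  define f where "f = \<lfloor>y\<rfloor>"
  have f0: "0 \<le> f" using y0 by (simp add: f_def)
  have rf: "real (nat f) = of_int f" using f0 by simp
  have xy: "2 powr y = x" using x by (simp add: y_def)
  have "(2::real)^(nat f) = 2 powr (real (nat f))" by (simp add: powr_realpow)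
  also have "\<dots> \<le> 2 powr y" using rf by (simp add: f_def)
  finally have A: "(2::real)^(nat f) \<le> x" using xy by simp
  have "x = 2 powr y" using xy by simp
  also have "\<dots> < 2 powr (real (nat f + 1))" using rf real_of_int_floor_add_one_gt[of y] by (simp add: f_def add.commute)
  also have "\<dots> = 2^(nat f + 1)" using powr_realpow[of 2 "nat f + 1"] by simp
  finally show ?thesis using A by (simp add: f_def y_def)
qed

lemma star_tree:
  fixes P :: "'a set"
  assumes "finite P" "p0 \<in> P"
  shows "spanning_tree P ((\<lambda>v. {p0, v}) ` (P - {p0}))"
proof -
  define T where "T = (\<lambda>v. {p0, v}) ` (P - {p0})"
  have inj: "inj_on (\<lambda>v. {p0, v}) (P - {p0})"
    by (rule inj_onI) (auto simp: doubleton_eq_iff)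
  have card: "card T = card P - 1" unfolding T_def
    using card_image[OF inj] assms by (simp add: card_Diff_singleton)
  have sub: "T \<subseteq> {{u, v} | u v. u \<in> P \<and> v \<in> P \<and> u \<noteq> v}" using assms by (auto simp: T_def)
  have toroot: "(u, p0) \<in> {(x, y). {x, y} \<in> T}\<^sup>*" "(p0, u) \<in> {(x, y). {x, y} \<in> T}\<^sup>*" if "u \<in> P" for u
  proof -
    have "u = p0 \<or> ({u, p0} \<in> T \<and> {p0, u} \<in> T)" using that by (auto simp: T_def insert_commute)
    then show "(u, p0) \<in> {(x, y). {x, y} \<in> T}\<^sup>*" "(p0, u) \<in> {(x, y). {x, y} \<in> T}\<^sup>*" by auto
  qed
  have "\<forall>u\<in>P. \<forall>v\<in>P. (u, v) \<in> {(x, y). {x, y} \<in> T}\<^sup>*"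
    using toroot by (meson rtrancl_trans)
  then show ?thesis using card sub by (simp add: spanning_tree_def T_def)
qed

lemma main_bound:
  fixes P :: "'a::euclidean_space set" and T :: "'a set set"
  assumes finP: "finite P" and two: "2 \<le> card P" and s: "s > 1" and vo: "valid_order P ord"
    and T: "spanning_tree P T"
  shows "total_length (uncoord_graph s ord)
     \<le> (132 * 37^DIM('a)) * max 1 (log 2 (aspect_ratio P)) * s^(DIM('a)+1) * total_length T"
proof -
  define G where "G = uncoord_graph s ord"
  have good: "good s P G" using good_graph[OF vo] by (simp add: G_def)
  have GE: "G \<subseteq> {{p,q} | p q. p \<in> P \<and> q \<in> P \<and> p \<noteq> q}" using good by (simp add: good_def)
  have finG: "finite G"
  proof (rule finite_subset[OF GE])
    have "{{p,q} | p q. p \<in> P \<and> q \<in> P \<and> p \<noteq> q} \<subseteq> (\<lambda>(p,q). {p,q}) ` (P \<times> P)" by auto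
    then show "finite {{p,q} | p q. p \<in> P \<and> q \<in> P \<and> p \<noteq> q}"
      using finP finite_subset by blast
  qed
  have TE: "T \<subseteq> {{u, v} | u v. u \<in> P \<and> v \<in> P \<and> u \<noteq> v}"
    and conn: "\<forall>u\<in>P. \<forall>v\<in>P. (u, v) \<in> {(x, y). {x, y} \<in> T}\<^sup>*"
    using T by (auto simp: spanning_tree_def)
  have finT: "finite T"
  proof (rule finite_subset[OF TE])
    have "{{p,q} | p q. p \<in> P \<and> q \<in> P \<and> p \<noteq> q} \<subseteq> (\<lambda>(p,q). {p,q}) ` (P \<times> P)" by auto
    then show "finite {{p,q} | p q. p \<in> P \<and> q \<in> P \<and> p \<noteq> q}"
      using finP finite_subset by blast
  qed
  have dbl: "\<forall>e\<in>T. \<exists>x y. e = {x,y}" using TE by blast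
  define W where "W = total_length T"
  have W0: "0 \<le> W" unfolding W_def total_length_def by (rule sum_nonneg) (use dbl in \<open>auto simp: diam2\<close>)
  define DS where "DS = {dist u v | u v. u \<in> P \<and> v \<in> P}"
  define dS where "dS = {dist u v | u v. u \<in> P \<and> v \<in> P \<and> u \<noteq> v}"
  have finDS: "finite DS"
  proof -
    have "DS = (\<lambda>(u,v). dist u v) ` (P \<times> P)" by (auto simp: DS_def)
    then show ?thesis using finP by simp
  qed
  have findS: "finite dS"
  proof -
    have "dS \<subseteq> DS" by (auto simp: dS_def DS_def)
    then show ?thesis using finDS finite_subset by blast
  qed
  obtain u0 v0 where uv0: "u0 \<in> P" "v0 \<in> P" "u0 \<noteq> v0"
  proof -
    have "\<not> (\<forall>a\<in>P. \<forall>b\<in>P. a = b)"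
    proof
      assume "\<forall>a\<in>P. \<forall>b\<in>P. a = b"
      then have "card P \<le> Suc 0" using finP by (simp add: card_le_Suc0_iff_eq)
      with two show False by simp
    qed
    then show ?thesis using that by blast
  qed
  have dSne: "dS \<noteq> {}" using uv0 by (auto simp: dS_def)
  have DSne: "DS \<noteq> {}" using uv0 by (auto simp: DS_def)
  define D where "D = Max DS"
  define \<delta> where "\<delta> = Min dS"
  have \<delta>pos: "\<delta> > 0"
  proof -
    have "\<delta> \<in> dS" unfolding \<delta>_def using Min_in[OF findS dSne] .
    then show ?thesis by (auto simp: dS_def)
  qed
  have \<delta>le: "\<delta> \<le> dist p q" if "p \<in> P" "q \<in> P" "p \<noteq> q" for p q
    unfolding \<delta>_def by (rule Min_le[OF findS]) (use that in \<open>auto simp: dS_def\<close>)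
  have Dge: "dist p q \<le> D" if "p \<in> P" "q \<in> P" for p q
    unfolding D_def by (rule Max_ge[OF finDS]) (use that in \<open>auto simp: DS_def\<close>)
  define \<alpha> where "\<alpha> = aspect_ratio P"
  have \<alpha>: "\<alpha> = D / \<delta>" by (simp add: \<alpha>_def aspect_ratio_def D_def \<delta>_def DS_def dS_def)
  have \<alpha>1: "1 \<le> \<alpha>" using \<delta>le[OF uv0] Dge[OF uv0(1,2)] \<delta>pos by (simp add: \<alpha>)
  define M where "M = max 1 (log 2 \<alpha>)"
  define K0 where "K0 = nat \<lfloor>log 2 \<alpha>\<rfloor>"
  define k where "k e = nat \<lfloor>log 2 (diameter e / \<delta>)\<rfloor>" for e :: "'a set"
  define B where "B = 66 * 37^DIM('a) * s^(DIM('a)+1) * W"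
  have edge: "\<exists>p q. e = {p,q} \<and> p \<in> P \<and> q \<in> P \<and> p \<noteq> q" if "e \<in> G" for e
    using GE that by blast
  have ratio: "1 \<le> diameter e / \<delta> \<and> diameter e / \<delta> \<le> \<alpha>" if eG: "e \<in> G" for e
  proof -
    obtain p q where pq: "e = {p,q}" "p \<in> P" "q \<in> P" "p \<noteq> q" using edge[OF eG] by blast
    have "\<delta> \<le> diameter e" "diameter e \<le> D" using \<delta>le[OF pq(2-4)] Dge[OF pq(2,3)] pq(1) by (auto simp: diam2)
    then show ?thesis using \<delta>pos by (simp add: \<alpha> divide_right_mono)
  qed
  have kK: "k ` G \<subseteq> {..K0}"
  proof
    fix x assume "x \<in> k ` G"
    then obtain e where e: "e \<in> G" "x = k e" by auto
    have "log 2 (diameter e / \<delta>) \<le> log 2 \<alpha>" using ratio[OF e(1)] by simp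
    then have "\<lfloor>log 2 (diameter e / \<delta>)\<rfloor> \<le> \<lfloor>log 2 \<alpha>\<rfloor>" by (rule floor_mono)
    then show "x \<in> {..K0}" using e by (simp add: k_def K0_def nat_mono)
  qed
  have "total_length G = (\<Sum>j\<in>{..K0}. \<Sum>e\<in>{e\<in>G. k e = j}. diameter e)"
    unfolding total_length_def using sum.group[OF finG _ kK, of diameter] by simp
  also have "\<dots> \<le> (\<Sum>j\<in>{..K0}. B)"
  proof (rule sum_mono)
    fix j assume "j \<in> {..K0}"
    define L where "L = \<delta> * 2^j"
    have L: "L > 0" using \<delta>pos by (simp add: L_def)
    have sub: "{e\<in>G. k e = j} \<subseteq> {e\<in>G. L \<le> diameter e \<and> diameter e < 2*L}"
    proof
      fix e assume "e \<in> {e\<in>G. k e = j}"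
      then have e: "e \<in> G" "k e = j" by auto
      have dy: "2^j \<le> diameter e / \<delta> \<and> diameter e / \<delta> < 2^(j+1)"
        using dyadic[of "diameter e / \<delta>"] ratio[OF e(1)] e(2) by (simp add: k_def)
      then have "\<delta> * 2^j \<le> diameter e" "diameter e < \<delta> * 2^(j+1)" using \<delta>pos by (auto simp: field_simps)
      then show "e \<in> {e\<in>G. L \<le> diameter e \<and> diameter e < 2*L}" using e by (simp add: L_def)
    qed
    have "(\<Sum>e\<in>{e\<in>G. k e = j}. diameter e) \<le> (\<Sum>e\<in>{e\<in>G. L \<le> diameter e \<and> diameter e < 2*L}. diameter e)"
      by (rule sum_mono2) (use finG sub edge in \<open>auto simp: diam2\<close>)
    also have "\<dots> \<le> B" unfolding B_def W_def
      by (rule per_scale[OF finP good s L finT dbl conn])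
    finally show "(\<Sum>e\<in>{e\<in>G. k e = j}. diameter e) \<le> B" .
  qed
  also have "\<dots> = real (K0 + 1) * B" by simp
  also have "\<dots> \<le> (2 * M) * B"
  proof (rule mult_right_mono)
    have "0 \<le> log 2 \<alpha>" using \<alpha>1 by simp
    then have "real K0 \<le> log 2 \<alpha>" by (simp add: K0_def)
    then show "real (K0 + 1) \<le> 2 * M" by (simp add: M_def)
    show "0 \<le> B" using s W0 by (simp add: B_def)
  qed
  also have "\<dots> = (132 * 37^DIM('a)) * M * s^(DIM('a)+1) * W" by (simp add: B_def)
  finally show ?thesis by (simp add: G_def M_def \<alpha>_def W_def)
qed

theorem theorem11:
  shows "\<exists>C>0. \<forall>(P :: 'a::euclidean_space set) (s :: real) ord.
           finite P \<and> 2 \<le> card P \<and> s > 1 \<and> valid_order P ord \<longrightarrow>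
           total_length (uncoord_graph s ord)
             \<le> C * max 1 (log 2 (aspect_ratio P)) * mst_weight P * s ^ (DIM('a) + 1)"
proof (intro exI[of _ "132 * 37^DIM('a)"] conjI allI impI)
  show "(0::real) < 132 * 37^DIM('a)" by simp
  fix P :: "'a set" and s :: real and ord
  assume h: "finite P \<and> 2 \<le> card P \<and> s > 1 \<and> valid_order P ord"
  then have finP: "finite P" and two: "2 \<le> card P" and s: "s > 1" and vo: "valid_order P ord" by auto
  define K where "K = (132 * 37^DIM('a)) * max 1 (log 2 (aspect_ratio P)) * s^(DIM('a)+1)"
  have K: "K > 0" using s by (simp add: K_def)
  define S where "S = {total_length T | T. spanning_tree P T}"
  obtain p0 where p0: "p0 \<in> P" using two by fastforce
  have Sne: "S \<noteq> {}" using star_tree[OF finP p0] by (auto simp: S_def)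
  have "total_length (uncoord_graph s ord) / K \<le> Inf S"
  proof (rule cInf_greatest[OF Sne])
    fix x assume "x \<in> S"
    then obtain T where T: "spanning_tree P T" "x = total_length T" by (auto simp: S_def)
    have "total_length (uncoord_graph s ord) \<le> K * x"
      using main_bound[OF finP two s vo T(1)] T(2) by (simp add: K_def mult.commute mult.left_commute)
    then show "total_length (uncoord_graph s ord) / K \<le> x" using K by (simp add: divide_le_eq mult.commute)
  qed
  then have "total_length (uncoord_graph s ord) \<le> K * mst_weight P"
    using K by (simp add: mst_weight_def S_def divide_le_eq mult.commute)
  then show "total_length (uncoord_graph s ord)
             \<le> 132 * 37^DIM('a) * max 1 (log 2 (aspect_ratio P)) * mst_weight P * s ^ (DIM('a) + 1)"
    by (simp add: K_def mult.commute mult.left_commute)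
qed


end
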